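(* Let $n$ be odd. Let $X_1\sim\mathsf{Bernoulli}(p)$ and $X_k=X_{k-1}\oplus U_k$ for $k=2,\dots,n$, where $U_2,\dots,U_n$ are i.i.d. $\mathsf{Bernoulli}(r)$ independent of $X_1$; let $Y_k=X_k\oplus V_k$ for $k=1,\dots,n$, where $V_1,\dots,V_n$ are i.i.d. $\mathsf{Bernoulli}(\alpha)$ independent of $X^n$. Assume $p\in[\frac12,1)$, $\alpha\in(0,\frac12)$, $\bar\alpha\bar p>\alpha p$, and $\frac{r}{\bar r}<\left(\frac{\alpha}{\bar\alpha}\right)^{n-1}$. Let $$\zeta_n(\varepsilon)=\bar r\,\frac{\mathsf{P}_{\mathsf{c}}(X^n|Y^n)-\varepsilon^n}{p(\bar\alpha\bar r)^n-\bar p(\alpha\bar r)^n}.$$ Then there exists $\varepsilon_{\mathsf L}<\mathsf{P}_{\mathsf{c}}^{1/n}(X^n|Y^n)$ such that for every $\varepsilon\in[\varepsilon_{\mathsf L},\mathsf{P}_{\mathsf{c}}^{1/n}(X^n|Y^n)]$, $$1-\zeta_n(\varepsilon)\Pr(Y^n=\mathbf 1)\le\underline{\mathcal{h}}_n^n(\varepsilon)\le1-\zeta_n(\varepsilon)\alpha^n,$$ and the $2^n$-ary Z-channel $\mathsf{Z}_n(\zeta_n(\varepsilon))$ achieves the lower bound on this interval.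
   Context: $\bar a=1-a$; $\oplus$ is addition mod 2; $\mathsf{Bernoulli}(p)$ has $\Pr(\cdot=1)=p$. $\mathsf{P}_{\mathsf{c}}(X^n|Z^n)=\sum_{z^n}\max_{x^n}P_{X^nZ^n}(x^n,z^n)$. For $\varepsilon\in[\mathsf{P}_{\mathsf{c}}^{1/n}(X^n),\mathsf{P}_{\mathsf{c}}^{1/n}(X^n|Y^n)]$, $\underline{\mathcal{h}}_n(\varepsilon)=\sup\{\mathsf{P}_{\mathsf{c}}^{1/n}(Y^n|Z^n): P_{Z^n|Y^n},\ \mathcal{Z}^n=\{0,1\}^n,\ X^n - Y^n - Z^n,\ \mathsf{P}_{\mathsf{c}}^{1/n}(X^n|Z^n)\le\varepsilon\}$. $\mathbf 0=(0,\dots,0)$, $\mathbf 1=(1,\dots,1)$. The $2^n$-ary Z-channel $\mathsf{Z}_n(\gamma)$ on $\{0,1\}^n$ is given by $\mathsf{W}(y|y)=1$ for $y\ne\mathbf 1$, $\mathsf{W}(\mathbf 0|\mathbf 1)=\gamma$, $\mathsf{W}(\mathbf 1|\mathbf 1)=1-\gamma$; "achieves the lower bound" means it satisfies $\mathsf{P}_{\mathsf{c}}^{1/n}(X^n|Z^n)\le\varepsilon$ and $\mathsf{P}_{\mathsf{c}}(Y^n|Z^n)=1-\zeta_n(\varepsilon)\Pr(Y^n=\mathbf 1)$. *)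

theory Defs
  imports Complex_Main
begin

text \<open>Binary sequences of length n are represented as bool lists of length n
  (True = 1, False = 0).\<close>

definition seqs :: "nat \<Rightarrow> bool list set" where
  "seqs n = {xs. length xs = n}"

definition ones :: "nat \<Rightarrow> bool list" where
  "ones n = replicate n True"

definition zeros :: "nat \<Rightarrow> bool list" where
  "zeros n = replicate n False"

definition bern :: "real \<Rightarrow> bool \<Rightarrow> real" where
  "bern q b = (if b then q else 1 - q)"

text \<open>Law of X^n: X_1 ~ Bernoulli p, X_k = X_{k-1} xor U_k, U_k ~ Bernoulli r iid.\<close>
definition PX :: "nat \<Rightarrow> real \<Rightarrow> real \<Rightarrow> bool list \<Rightarrow> real" where
  "PX n p r x = bern p (x ! 0) * (\<Prod>k\<in>{1..<n}. bern r (x ! k \<noteq> x ! (k - 1)))"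

text \<open>Joint law of (X^n, Y^n), Y_k = X_k xor V_k, V_k ~ Bernoulli alpha iid.\<close>
definition PXY :: "nat \<Rightarrow> real \<Rightarrow> real \<Rightarrow> real \<Rightarrow> bool list \<Rightarrow> bool list \<Rightarrow> real" where
  "PXY n p r \<alpha> x y = PX n p r x * (\<Prod>k<n. bern \<alpha> (x ! k \<noteq> y ! k))"

definition PY :: "nat \<Rightarrow> real \<Rightarrow> real \<Rightarrow> real \<Rightarrow> bool list \<Rightarrow> real" where
  "PY n p r \<alpha> y = (\<Sum>x\<in>seqs n. PXY n p r \<alpha> x y)"

definition PcX :: "nat \<Rightarrow> real \<Rightarrow> real \<Rightarrow> real" where
  "PcX n p r = Max ((PX n p r) ` seqs n)"

definition PcXY :: "nat \<Rightarrow> real \<Rightarrow> real \<Rightarrow> real \<Rightarrow> real" where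
  "PcXY n p r \<alpha> = (\<Sum>y\<in>seqs n. Max ((\<lambda>x. PXY n p r \<alpha> x y) ` seqs n))"

text \<open>A channel P_{Z^n|Y^n} with Z^n in {0,1}^n: W y z = P(Z=z | Y=y).\<close>
definition is_channel :: "nat \<Rightarrow> (bool list \<Rightarrow> bool list \<Rightarrow> real) \<Rightarrow> bool" where
  "is_channel n W \<longleftrightarrow> (\<forall>y\<in>seqs n. (\<forall>z\<in>seqs n. 0 \<le> W y z) \<and> (\<Sum>z\<in>seqs n. W y z) = 1)"

text \<open>With X - Y - Z Markov: P(x,z) = sum_y P(x,y) W(z|y).\<close>
definition PcXZ :: "nat \<Rightarrow> real \<Rightarrow> real \<Rightarrow> real \<Rightarrow> (bool list \<Rightarrow> bool list \<Rightarrow> real) \<Rightarrow> real" where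
  "PcXZ n p r \<alpha> W = (\<Sum>z\<in>seqs n. Max ((\<lambda>x. \<Sum>y\<in>seqs n. PXY n p r \<alpha> x y * W y z) ` seqs n))"

definition PcYZ :: "nat \<Rightarrow> real \<Rightarrow> real \<Rightarrow> real \<Rightarrow> (bool list \<Rightarrow> bool list \<Rightarrow> real) \<Rightarrow> real" where
  "PcYZ n p r \<alpha> W = (\<Sum>z\<in>seqs n. Max ((\<lambda>y. PY n p r \<alpha> y * W y z) ` seqs n))"

definition hlow :: "nat \<Rightarrow> real \<Rightarrow> real \<Rightarrow> real \<Rightarrow> real \<Rightarrow> real" where
  "hlow n p r \<alpha> \<epsilon> = Sup {root n (PcYZ n p r \<alpha> W) | W. is_channel n W \<and> root n (PcXZ n p r \<alpha> W) \<le> \<epsilon>}"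

definition Zchan :: "nat \<Rightarrow> real \<Rightarrow> bool list \<Rightarrow> bool list \<Rightarrow> real" where
  "Zchan n \<gamma> y z =
     (if y \<noteq> ones n then (if z = y then 1 else 0)
      else if z = zeros n then \<gamma> else if z = ones n then 1 - \<gamma> else 0)"

definition zeta :: "nat \<Rightarrow> real \<Rightarrow> real \<Rightarrow> real \<Rightarrow> real \<Rightarrow> real" where
  "zeta n p r \<alpha> \<epsilon> = (1 - r) * (PcXY n p r \<alpha> - \<epsilon> ^ n)
      / (p * ((1 - \<alpha>) * (1 - r)) ^ n - (1 - p) * (\<alpha> * (1 - r)) ^ n)"

end

theory Submission
  imports Defs
begin


lemma finite_seqs[simp]: "finite (seqs n)"
proof -
  have "seqs n = {xs. set xs \<subseteq> UNIV \<and> length xs = n}" by (auto simp: seqs_def)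
  thus ?thesis using finite_lists_length_eq[of "UNIV::bool set" n] by simp
qed

lemma seqs_Suc_Cons: "seqs (Suc n) = Cons True ` seqs n \<union> Cons False ` seqs n"
  by (auto simp: seqs_def length_Suc_conv)

lemma sum_seqs_Cons: "sum f (seqs (Suc n)) = (\<Sum>xs\<in>seqs n. f (True#xs) + f (False#xs))"
  unfolding seqs_Suc_Cons
  by (subst sum.union_disjoint) (auto simp: sum.reindex sum.distrib)

lemma seqs_Suc_snoc: "seqs (Suc n) = (\<lambda>xs. xs@[True]) ` seqs n \<union> (\<lambda>xs. xs@[False]) ` seqs n"
proof
  have "xs \<in> (\<lambda>xs. xs@[True]) ` seqs n \<union> (\<lambda>xs. xs@[False]) ` seqs n" if len: "length xs = Suc n" for xs
  proof -
    obtain ys b where yb: "xs = ys @ [b]" "length ys = n" using len[unfolded length_Suc_conv_rev] by blast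
    hence "ys \<in> seqs n" by (simp add: seqs_def)
    with yb(1) show ?thesis by (cases b) blast+
  qed
  thus "seqs (Suc n) \<subseteq> (\<lambda>xs. xs@[True]) ` seqs n \<union> (\<lambda>xs. xs@[False]) ` seqs n"
    unfolding seqs_def by blast
  show "(\<lambda>xs. xs@[True]) ` seqs n \<union> (\<lambda>xs. xs@[False]) ` seqs n \<subseteq> seqs (Suc n)"
    unfolding seqs_def by auto
qed

lemma sum_seqs_snoc: "sum f (seqs (Suc n)) = (\<Sum>xs\<in>seqs n. f (xs@[True]) + f (xs@[False]))"
proof -
  have inj: "inj_on (\<lambda>xs. xs@[b]) A" for b :: bool and A by (simp add: inj_on_def)
  have disj: "(\<lambda>xs. xs@[True]) ` seqs n \<inter> (\<lambda>xs. xs@[False]) ` seqs n = {}" by auto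
  show ?thesis unfolding seqs_Suc_snoc
    by (simp add: sum.union_disjoint[OF _ _ disj] sum.reindex[OF inj] sum.distrib)
qed

lemma bern_sum: "bern a (b \<noteq> True) + bern a (b \<noteq> False) = 1"
  by (cases b) (auto simp: bern_def)

lemma noise_sum: "length x = n \<Longrightarrow> (\<Sum>y\<in>seqs n. \<Prod>k<n. bern a (x!k \<noteq> y!k)) = 1"
proof (induction n arbitrary: x)
  case 0 thus ?case by (simp add: seqs_def)
next
  case (Suc n)
  then obtain b x' where x: "x = b#x'" "length x' = n" by (metis length_Suc_conv)
  have "(\<Sum>y\<in>seqs (Suc n). \<Prod>k<Suc n. bern a (x!k \<noteq> y!k))
     = (\<Sum>ys\<in>seqs n. (bern a (b \<noteq> True) + bern a (b \<noteq> False)) * (\<Prod>k<n. bern a (x'!k \<noteq> ys!k)))"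
    unfolding sum_seqs_Cons
    by (intro sum.cong refl, simp only: prod.lessThan_Suc_shift x) (simp add: algebra_simps)
  also have "\<dots> = 1" using Suc.IH[OF x(2)] by (cases b) (simp_all add: bern_def)
  finally show ?case .
qed

lemma PX_snoc:
  assumes "length xs = Suc m"
  shows "PX (Suc (Suc m)) p r (xs@[b]) = PX (Suc m) p r xs * bern r (b \<noteq> xs!m)"
proof -
  have "(\<Prod>k\<in>{1..<Suc (Suc m)}. bern r ((xs@[b]) ! k \<noteq> (xs@[b]) ! (k - 1)))
      = (\<Prod>k\<in>{1..<Suc m}. bern r ((xs@[b]) ! k \<noteq> (xs@[b]) ! (k - 1))) * bern r (b \<noteq> xs!m)"
    using assms by (simp add: prod.atLeastLessThan_Suc nth_append)
  also have "(\<Prod>k\<in>{1..<Suc m}. bern r ((xs@[b]) ! k \<noteq> (xs@[b]) ! (k - 1)))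
      = (\<Prod>k\<in>{1..<Suc m}. bern r (xs ! k \<noteq> xs ! (k - 1)))"
    using assms by (intro prod.cong) (auto simp: nth_append)
  finally show ?thesis using assms by (simp add: PX_def nth_append)
qed

lemma PX_sum: "(\<Sum>x\<in>seqs (Suc m). PX (Suc m) p r x) = 1"
proof (induction m)
  case 0
  have "seqs 0 = {[]}" by (auto simp: seqs_def)
  thus ?case by (simp add: sum_seqs_Cons PX_def bern_def)
next
  case (Suc m)
  have "(\<Sum>x\<in>seqs (Suc (Suc m)). PX (Suc (Suc m)) p r x)
     = (\<Sum>xs\<in>seqs (Suc m). PX (Suc m) p r xs * (bern r (True \<noteq> xs!m) + bern r (False \<noteq> xs!m)))"
    apply (subst sum_seqs_snoc) by (intro sum.cong) (auto simp: PX_snoc seqs_def algebra_simps)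
  also have "\<dots> = (\<Sum>xs\<in>seqs (Suc m). PX (Suc m) p r xs)"
    by (intro sum.cong refl) (auto simp: bern_def)
  finally show ?case using Suc.IH by simp
qed



lemma bern_nonneg: "0 \<le> q \<Longrightarrow> q \<le> 1 \<Longrightarrow> 0 \<le> bern q b"
  by (auto simp: bern_def)

definition Aq :: "nat \<Rightarrow> real \<Rightarrow> bool list \<Rightarrow> real" where
  "Aq n a y = (\<Prod>k<n. bern a (True \<noteq> y!k))"
definition Bq :: "nat \<Rightarrow> real \<Rightarrow> bool list \<Rightarrow> real" where
  "Bq n a y = (\<Prod>k<n. bern a (False \<noteq> y!k))"

locale S5 =
  fixes n :: nat and p r \<alpha> :: real
  assumes odd: "odd n" and p1: "1/2 \<le> p" and p2: "p < 1" and a1: "0 < \<alpha>" and a2: "\<alpha> < 1/2"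
    and r1: "0 \<le> r" and r2: "r < 1" and h1: "(1 - \<alpha>) * (1 - p) > \<alpha> * p"
    and h2: "r / (1 - r) < (\<alpha> / (1 - \<alpha>)) ^ (n - 1)"
begin

abbreviation "P \<equiv> PXY n p r \<alpha>"
abbreviation "One \<equiv> ones n"
abbreviation "Ze \<equiv> zeros n"
abbreviation "S \<equiv> seqs n"
abbreviation "c1 \<equiv> (1 - r) ^ (n - 1)"
definition "\<Delta> = p * c1 * (1 - \<alpha>) ^ n - (1 - p) * c1 * \<alpha> ^ n"

lemma n_pos: "0 < n" using odd by (cases n) auto

lemma P_nonneg: "0 \<le> P x y"
  using p1 p2 r1 r2 a1 a2
  by (auto simp: PXY_def PX_def intro!: mult_nonneg_nonneg prod_nonneg bern_nonneg)

lemma O_in: "One \<in> S" and Zr_in: "Ze \<in> S" by (auto simp: ones_def zeros_def seqs_def)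

lemma O_ne_Zr: "One \<noteq> Ze" using n_pos by (cases n) (auto simp: ones_def zeros_def)

lemma S_ne: "S \<noteq> {}" using O_in by auto

lemma bern_a_bounds: "\<alpha> \<le> bern \<alpha> b" "bern \<alpha> b \<le> 1 - \<alpha>" "0 \<le> bern \<alpha> b"
  using a1 a2 by (auto simp: bern_def)

lemma prod_lb: "\<alpha> ^ n \<le> (\<Prod>k<n. bern \<alpha> (f k))"
proof -
  have "\<alpha> ^ n = (\<Prod>k<n. \<alpha>)" by simp
  also have "\<dots> \<le> (\<Prod>k<n. bern \<alpha> (f k))"
    using a1 by (intro prod_mono) (auto intro: bern_a_bounds less_imp_le)
  finally show ?thesis .
qed

lemma prod_ub: "(\<Prod>k<n. bern \<alpha> (f k)) \<le> (1 - \<alpha>) ^ n"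
proof -
  have "(\<Prod>k<n. bern \<alpha> (f k)) \<le> (\<Prod>k<n. 1 - \<alpha>)"
    by (intro prod_mono) (auto intro: bern_a_bounds)
  thus ?thesis by simp
qed

lemma PX_O: "PX n p r One = p * c1"
proof -
  have "(\<Prod>k\<in>{1..<n}. bern r (One ! k \<noteq> One ! (k - 1))) = (\<Prod>k\<in>{1..<n}. 1 - r)"
    by (intro prod.cong) (auto simp: ones_def bern_def)
  thus ?thesis using n_pos by (simp add: PX_def ones_def bern_def)
qed

lemma PX_Zr: "PX n p r Ze = (1 - p) * c1"
proof -
  have "(\<Prod>k\<in>{1..<n}. bern r (Ze ! k \<noteq> Ze ! (k - 1))) = (\<Prod>k\<in>{1..<n}. 1 - r)"
    by (intro prod.cong) (auto simp: zeros_def bern_def)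
  thus ?thesis using n_pos by (simp add: PX_def zeros_def bern_def)
qed

lemma P_O: "P One y = p * c1 * Aq n \<alpha> y"
proof -
  have "(\<Prod>k<n. bern \<alpha> (One ! k \<noteq> y ! k)) = Aq n \<alpha> y"
    unfolding Aq_def by (intro prod.cong) (auto simp: ones_def)
  thus ?thesis by (simp add: PXY_def PX_O)
qed

lemma P_Zr: "P Ze y = (1 - p) * c1 * Bq n \<alpha> y"
proof -
  have "(\<Prod>k<n. bern \<alpha> (Ze ! k \<noteq> y ! k)) = Bq n \<alpha> y"
    unfolding Bq_def by (intro prod.cong) (auto simp: zeros_def)
  thus ?thesis by (simp add: PXY_def PX_Zr)
qed

lemma Aq_bounds: "\<alpha> ^ n \<le> Aq n \<alpha> y" "Aq n \<alpha> y \<le> (1 - \<alpha>) ^ n"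
  unfolding Aq_def by (rule prod_lb, rule prod_ub)
lemma Bq_bounds: "\<alpha> ^ n \<le> Bq n \<alpha> y" "Bq n \<alpha> y \<le> (1 - \<alpha>) ^ n"
  unfolding Bq_def by (rule prod_lb, rule prod_ub)

lemma Aq_O: "Aq n \<alpha> One = (1 - \<alpha>) ^ n"
  unfolding Aq_def by (simp add: ones_def bern_def)
lemma Bq_O: "Bq n \<alpha> One = \<alpha> ^ n"
  unfolding Bq_def by (simp add: ones_def bern_def)
lemma Aq_Zr: "Aq n \<alpha> Ze = \<alpha> ^ n"
  unfolding Aq_def by (simp add: zeros_def bern_def)
lemma Bq_Zr: "Bq n \<alpha> Ze = (1 - \<alpha>) ^ n"
  unfolding Bq_def by (simp add: zeros_def bern_def)

lemma AB_prod: "Aq n \<alpha> y * Bq n \<alpha> y = (\<alpha> * (1 - \<alpha>)) ^ n"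
proof -
  have "Aq n \<alpha> y * Bq n \<alpha> y = (\<Prod>k<n. bern \<alpha> (True \<noteq> y!k) * bern \<alpha> (False \<noteq> y!k))"
    unfolding Aq_def Bq_def by (simp add: prod.distrib)
  also have "\<dots> = (\<Prod>k<n. \<alpha> * (1 - \<alpha>))"
    by (intro prod.cong) (auto simp: bern_def)
  finally show ?thesis by simp
qed

lemma PY_ge: "\<alpha> ^ n \<le> PY n p r \<alpha> y"
proof -
  obtain m where n: "n = Suc m" using n_pos by (cases n) auto
  have "PY n p r \<alpha> y = (\<Sum>x\<in>S. PX n p r x * (\<Prod>k<n. bern \<alpha> (x ! k \<noteq> y ! k)))"
    by (simp add: PY_def PXY_def)
  also have "\<dots> \<ge> (\<Sum>x\<in>S. PX n p r x * \<alpha> ^ n)"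
    using p1 p2 r1 r2
    by (intro sum_mono mult_left_mono prod_lb) (auto simp: PX_def intro!: mult_nonneg_nonneg prod_nonneg bern_nonneg)
  moreover have "(\<Sum>x\<in>S. PX n p r x * \<alpha> ^ n) = \<alpha> ^ n"
    using PX_sum[of m p r] by (simp add: n sum_distrib_right[symmetric])
  ultimately show ?thesis by simp
qed

lemma PY_sum: "(\<Sum>y\<in>S. PY n p r \<alpha> y) = 1"
proof -
  obtain m where n: "n = Suc m" using n_pos by (cases n) auto
  have "(\<Sum>y\<in>S. PY n p r \<alpha> y) = (\<Sum>x\<in>S. PX n p r x * (\<Sum>y\<in>S. \<Prod>k<n. bern \<alpha> (x ! k \<noteq> y ! k)))"
    unfolding PY_def PXY_def by (subst sum.swap) (simp add: sum_distrib_left)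
  also have "\<dots> = (\<Sum>x\<in>S. PX n p r x)"
  proof (intro sum.cong refl)
    fix x assume "x \<in> S"
    hence "(\<Sum>y\<in>S. \<Prod>k<n. bern \<alpha> (x ! k \<noteq> y ! k)) = 1"
      by (intro noise_sum) (simp add: seqs_def)
    thus "PX n p r x * (\<Sum>y\<in>S. \<Prod>k<n. bern \<alpha> (x ! k \<noteq> y ! k)) = PX n p r x" by simp
  qed
  finally show ?thesis using PX_sum[of m p r] by (simp add: n)
qed

lemma PY_nonneg: "0 \<le> PY n p r \<alpha> y"
  using PY_ge a1 by (meson order.trans zero_le_power less_imp_le)

lemma PY_le1: "y \<in> S \<Longrightarrow> PY n p r \<alpha> y \<le> 1"
  using PY_sum member_le_sum[of y S "PY n p r \<alpha>"] PY_nonneg by simp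

lemma sum_noise_x: "x \<in> S \<Longrightarrow> (\<Sum>y\<in>S. P x y) = PX n p r x"
proof -
  assume "x \<in> S"
  hence h: "(\<Sum>y\<in>S. \<Prod>k<n. bern \<alpha> (x ! k \<noteq> y ! k)) = 1"
    by (intro noise_sum) (simp add: seqs_def)
  have "(\<Sum>y\<in>S. P x y) = PX n p r x * (\<Sum>y\<in>S. \<Prod>k<n. bern \<alpha> (x ! k \<noteq> y ! k))"
    unfolding PXY_def by (simp add: sum_distrib_left)
  thus ?thesis using h by simp
qed

end


lemma alg1:
  fixes a u p r s :: real and m :: nat
  assumes "0 < u" "0 \<le> r" "0 \<le> p" "0 \<le> s" "0 \<le> a"
    and h: "r * u ^ (m + 2) \<le> s * a ^ (m + 2)"
    and g: "p * a ^ (m + 1) \<le> (1 - p) * u ^ (m + 1)"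
  shows "p * r ^ 2 * u ^ (m + 3) \<le> (1 - p) * s ^ 2 * a ^ (m + 3)"
proof -
  have "(r * u ^ (m + 2)) ^ 2 \<le> (s * a ^ (m + 2)) ^ 2"
    using assms by (intro power_mono h) auto
  moreover have "(m + 2) * 2 = 2 * m + 4" by simp
  hence "u ^ (2 * m + 4) = (u ^ (m + 2)) ^ 2" "a ^ (2 * m + 4) = (a ^ (m + 2)) ^ 2"
    by (metis power_mult)+
  ultimately have e1: "r ^ 2 * u ^ (2 * m + 4) \<le> s ^ 2 * a ^ (2 * m + 4)"
    by (simp add: power_mult_distrib)
  have eu: "u ^ (m + 3) * u ^ (m + 1) = u ^ (2 * m + 4)"
    unfolding power_add[symmetric] by (rule arg_cong[where f="\<lambda>k. u ^ k"]) simp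
  have ea: "a ^ (m + 3) * a ^ (m + 1) = a ^ (2 * m + 4)"
    unfolding power_add[symmetric] by (rule arg_cong[where f="\<lambda>k. a ^ k"]) simp
  have "p * r ^ 2 * u ^ (m + 3) * u ^ (m + 1) = p * (r ^ 2 * u ^ (2 * m + 4))"
    using eu by (simp only: mult.assoc)
  also have "\<dots> \<le> p * (s ^ 2 * a ^ (2 * m + 4))"
    using e1 assms by (intro mult_left_mono) auto
  also have "\<dots> = s ^ 2 * a ^ (m + 3) * (p * a ^ (m + 1))"
    unfolding ea[symmetric] by (simp only: mult.assoc mult.left_commute)
  also have "\<dots> \<le> s ^ 2 * a ^ (m + 3) * ((1 - p) * u ^ (m + 1))"
    using g assms by (intro mult_left_mono) auto
  also have "\<dots> = ((1 - p) * s ^ 2 * a ^ (m + 3)) * u ^ (m + 1)" by (simp only: mult.assoc mult.left_commute mult.commute)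
  finally have "(p * r ^ 2 * u ^ (m + 3)) * u ^ (m + 1) \<le> ((1 - p) * s ^ 2 * a ^ (m + 3)) * u ^ (m + 1)" .
  moreover have "0 < u ^ (m + 1)" using assms by simp
  ultimately show ?thesis by (rule mult_right_le_imp_le)
qed

context S5 begin

lemma t_le1: "\<alpha> / (1 - \<alpha>) \<le> 1" using a1 a2 by simp

lemma r_half: "r < 1 - r"
proof -
  have "(\<alpha> / (1 - \<alpha>)) ^ (n - 1) \<le> 1"
    using t_le1 a1 a2 by (intro power_le_one) auto
  hence "r / (1 - r) < 1" using h2 by linarith
  thus ?thesis using r2 by (simp add: divide_less_eq)
qed

lemma H1: "r * (1 - \<alpha>) ^ (n - 1) < (1 - r) * \<alpha> ^ (n - 1)"
proof -
  have "r / (1 - r) < \<alpha> ^ (n - 1) / (1 - \<alpha>) ^ (n - 1)" using h2 by (simp add: power_divide)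
  moreover have "0 < (1 - \<alpha>) ^ (n - 1)" "0 < 1 - r" using a2 r2 by auto
  ultimately show ?thesis by (simp add: field_simps)
qed

lemma pa_pow: "p * \<alpha> ^ (Suc m) \<le> (1 - p) * (1 - \<alpha>) ^ (Suc m)"
proof -
  have f1: "\<alpha> ^ m \<le> (1 - \<alpha>) ^ m" using a1 a2 by (intro power_mono) auto
  have f2: "p * \<alpha> \<le> (1 - p) * (1 - \<alpha>)" using h1 by (simp add: mult.commute)
  have f3: "0 \<le> (1 - p) * (1 - \<alpha>)" using p2 a2 by simp
  have f4: "0 \<le> \<alpha> ^ m" using a1 by simp
  have "(p * \<alpha>) * \<alpha> ^ m \<le> ((1 - p) * (1 - \<alpha>)) * (1 - \<alpha>) ^ m"
    by (rule mult_mono[OF f2 f1 f3 f4])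
  thus ?thesis by (simp add: algebra_simps)
qed

lemma pr_lt: "2 \<le> n \<Longrightarrow> p * r < (1 - p) * (1 - r)"
proof -
  assume "2 \<le> n"
  define m where "m = n - 2"
  have m: "n - 1 = Suc m" using \<open>2 \<le> n\<close> unfolding m_def by arith
  have "(p * r) * (1 - \<alpha>) ^ (n - 1) < p * ((1 - r) * \<alpha> ^ (n - 1))"
    using H1 p1 by (simp add: mult.assoc)
  also have "\<dots> = (1 - r) * (p * \<alpha> ^ (n - 1))" by simp
  also have "\<dots> \<le> (1 - r) * ((1 - p) * (1 - \<alpha>) ^ (n - 1))"
    using pa_pow[of m] r2 m by (intro mult_left_mono) auto
  finally have "(p * r) * (1 - \<alpha>) ^ (n - 1) < ((1 - p) * (1 - r)) * (1 - \<alpha>) ^ (n - 1)"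
    by (simp add: algebra_simps)
  thus ?thesis using a2 by (simp add: mult_less_cancel_right)
qed

definition "K = p * r * (1 - r) ^ (n - 2) * (1 - \<alpha>) ^ n"

lemma K_nonneg: "0 \<le> K" unfolding K_def using p1 r1 r2 a2
  by (intro mult_nonneg_nonneg zero_le_power) auto

lemma nonconst_exists:
  assumes "x \<in> S" "x \<noteq> One" "x \<noteq> Ze"
  shows "\<exists>k\<in>{1..<n}. x ! k \<noteq> x ! (k - 1)"
proof (rule ccontr)
  assume "\<not> ?thesis"
  hence c: "\<And>k. 1 \<le> k \<Longrightarrow> k < n \<Longrightarrow> x ! k = x ! (k - 1)" by auto
  have all: "k < n \<longrightarrow> x ! k = x ! 0" for k
  proof (induction k)
    case (Suc k)
    show ?case
    proof
      assume "Suc k < n"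
      hence "x ! Suc k = x ! k" using c[of "Suc k"] by simp
      thus "x ! Suc k = x ! 0" using Suc.IH \<open>Suc k < n\<close> by simp
    qed
  qed simp
  have len: "length x = n" using assms(1) by (simp add: seqs_def)
  have "x = replicate n (x ! 0)"
  proof (rule nth_equalityI)
    show "length x = length (replicate n (x ! 0))" using len by simp
    fix i assume "i < length x"
    thus "x ! i = replicate n (x ! 0) ! i" using all[of i] len by simp
  qed
  thus False using assms(2,3) unfolding ones_def zeros_def by (cases "x ! 0") simp_all
qed

lemma PX_nonconst:
  assumes "x \<in> S" "x \<noteq> One" "x \<noteq> Ze"
  shows "PX n p r x \<le> p * r * (1 - r) ^ (n - 2)" and "2 \<le> n"
proof -
  obtain k0 where k0: "k0 \<in> {1..<n}" "x ! k0 \<noteq> x ! (k0 - 1)" using nonconst_exists[OF assms] by blast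
  thus "2 \<le> n" by auto
  let ?f = "\<lambda>k. bern r (x ! k \<noteq> x ! (k - 1))"
  have "(\<Prod>k\<in>{1..<n}. ?f k) = ?f k0 * (\<Prod>k\<in>{1..<n} - {k0}. ?f k)"
    using k0 by (intro prod.remove) auto
  also have "?f k0 = r" using k0 by (simp add: bern_def)
  also have "(\<Prod>k\<in>{1..<n} - {k0}. ?f k) \<le> (\<Prod>k\<in>{1..<n} - {k0}. 1 - r)"
    using r_half r1 r2 by (intro prod_mono) (auto simp: bern_def)
  also have "\<dots> = (1 - r) ^ (n - 2)" using k0 by (simp add: card_Diff_singleton numeral_2_eq_2)
  finally have pr: "(\<Prod>k\<in>{1..<n}. ?f k) \<le> r * (1 - r) ^ (n - 2)" using r1 by (meson mult_left_mono)
  have b: "bern p (x ! 0) \<le> p" "0 \<le> bern p (x ! 0)" using p1 p2 by (auto simp: bern_def)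
  have pf0: "0 \<le> (\<Prod>k\<in>{1..<n}. ?f k)" using r1 r2 by (intro prod_nonneg) (auto intro: bern_nonneg)
  have "bern p (x ! 0) * (\<Prod>k\<in>{1..<n}. ?f k) \<le> p * (r * (1 - r) ^ (n - 2))"
    apply (rule mult_mono) using b pr p1 pf0 by auto
  thus "PX n p r x \<le> p * r * (1 - r) ^ (n - 2)" by (simp add: PX_def mult.assoc)
qed

lemma P_nonconst:
  assumes "x \<in> S" "x \<noteq> One" "x \<noteq> Ze"
  shows "P x y \<le> K"
proof -
  have px0: "0 \<le> PX n p r x" using p1 p2 r1 r2
    by (auto simp: PX_def intro!: mult_nonneg_nonneg prod_nonneg bern_nonneg)
  have "PX n p r x * (\<Prod>k<n. bern \<alpha> (x ! k \<noteq> y ! k)) \<le> (p * r * (1 - r) ^ (n - 2)) * (1 - \<alpha>) ^ n"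
    apply (rule mult_mono) using PX_nonconst(1)[OF assms] prod_ub p1 r1 r2 px0
    by (auto intro!: prod_nonneg bern_a_bounds)
  thus ?thesis by (simp add: PXY_def K_def)
qed

lemma K_lt: "2 \<le> n \<Longrightarrow> K < P Ze Ze"
proof -
  assume n2: "2 \<le> n"
  have "n - 1 = Suc (n - 2)" using n2 by arith
  hence c1: "c1 = (1 - r) * (1 - r) ^ (n - 2)" by simp
  have "K = (p * r) * ((1 - r) ^ (n - 2) * (1 - \<alpha>) ^ n)" by (simp add: K_def algebra_simps)
  also have "\<dots> < ((1 - p) * (1 - r)) * ((1 - r) ^ (n - 2) * (1 - \<alpha>) ^ n)"
    using pr_lt[OF n2] r2 a2 by (intro mult_strict_right_mono) auto
  also have "\<dots> = P Ze Ze" unfolding P_Zr Bq_Zr c1 by (simp add: algebra_simps)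
  finally show ?thesis .
qed

lemma K_sq: "2 \<le> n \<Longrightarrow> K ^ 2 \<le> P One y * P Ze y"
proof -
  assume n2: "2 \<le> n"
  have "n \<noteq> 2" using odd by auto
  define m where "m = n - 3"
  have n3: "n = m + 3" "n - 1 = m + 2" "n - 2 = m + 1" using n2 \<open>n \<noteq> 2\<close> unfolding m_def by arith+
  define X where "X = (1 - r) ^ (m + 1)"
  define U where "U = (1 - \<alpha>) ^ (m + 3)"
  define A' where "A' = \<alpha> ^ (m + 3)"
  have X0: "0 \<le> X" "0 \<le> U" using r2 a2 unfolding X_def U_def by auto
  have Q: "p * r ^ 2 * U \<le> (1 - p) * (1 - r) ^ 2 * A'"
    unfolding U_def A'_def
  proof (rule alg1)
    show "r * (1 - \<alpha>) ^ (m + 2) \<le> (1 - r) * \<alpha> ^ (m + 2)" using H1 n3 by simp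
    show "p * \<alpha> ^ (m + 1) \<le> (1 - p) * (1 - \<alpha>) ^ (m + 1)" using pa_pow[of m] by simp
  qed (use a1 a2 r1 r2 p1 p2 in auto)
  have K: "K = p * r * X * U" unfolding K_def X_def U_def n3(3) by (simp add: n3(1))
  have c1: "c1 = (1 - r) * X" unfolding X_def n3(2) by simp
  have PP: "P One y * P Ze y = p * (1 - p) * ((1 - r) * X) ^ 2 * (A' * U)"
  proof -
    have "P One y * P Ze y = p * (1 - p) * c1 ^ 2 * (Aq n \<alpha> y * Bq n \<alpha> y)"
      by (simp add: P_O P_Zr power2_eq_square algebra_simps)
    also have "Aq n \<alpha> y * Bq n \<alpha> y = (\<alpha> * (1 - \<alpha>)) ^ n" by (rule AB_prod)
    also have "\<dots> = A' * U" unfolding A'_def U_def by (simp add: n3(1) power_mult_distrib)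
    finally show ?thesis unfolding c1 .
  qed
  have "K ^ 2 = (p * r ^ 2 * U) * (p * X ^ 2 * U)" unfolding K by (simp add: power2_eq_square algebra_simps)
  also have "\<dots> \<le> ((1 - p) * (1 - r) ^ 2 * A') * (p * X ^ 2 * U)"
    using Q X0 p1 by (intro mult_right_mono) auto
  also have "\<dots> = P One y * P Ze y" unfolding PP by (simp add: power2_eq_square algebra_simps)
  finally show ?thesis .
qed

lemma P_const_max:
  assumes "x \<in> S"
  shows "P x y \<le> max (P Ze y) (P One y)"
proof (cases "x = One \<or> x = Ze")
  case True thus ?thesis by auto
next
  case False
  hence nc: "x \<noteq> One" "x \<noteq> Ze" by auto
  have n2: "2 \<le> n" using PX_nonconst(2)[OF assms nc] .
  let ?M = "max (P Ze y) (P One y)"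
  have M0: "0 \<le> ?M" using P_nonneg[of Ze y] by (simp add: le_max_iff_disj)
  have "P One y * P Ze y \<le> ?M * ?M"
    using P_nonneg M0 by (intro mult_mono) auto
  hence "K ^ 2 \<le> ?M ^ 2" using order.trans[OF K_sq[OF n2, of y]] by (simp add: power2_eq_square)
  hence "K \<le> ?M" using M0 by (rule power2_le_imp_le)
  thus ?thesis using P_nonconst[OF assms nc, of y] by linarith
qed

end


context S5 begin

lemma m_eq: "Max ((\<lambda>x. P x y) ` S) = max (P Ze y) (P One y)"
proof (rule Max_eqI)
  show "finite ((\<lambda>x. P x y) ` S)" by simp
  show "a \<le> max (P Ze y) (P One y)" if "a \<in> (\<lambda>x. P x y) ` S" for a
    using that P_const_max by auto
  show "max (P Ze y) (P One y) \<in> (\<lambda>x. P x y) ` S"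
    using O_in Zr_in by (cases "P Ze y \<le> P One y") (auto simp: max_def)
qed

lemma c1_pos: "0 < c1" using r2 by simp

lemma Delta_eq: "\<Delta> = P One One - P Ze One"
  by (simp add: \<Delta>_def P_O P_Zr Aq_O Bq_O)

lemma pa_n: "p * \<alpha> ^ n < (1 - p) * (1 - \<alpha>) ^ n"
proof -
  obtain m where m: "n = Suc m" using n_pos by (cases n) auto
  have f1: "\<alpha> ^ m \<le> (1 - \<alpha>) ^ m" using a1 a2 by (intro power_mono) auto
  have f2: "p * \<alpha> < (1 - p) * (1 - \<alpha>)" using h1 by (simp add: mult.commute)
  have "(p * \<alpha>) * \<alpha> ^ m < ((1 - p) * (1 - \<alpha>)) * (1 - \<alpha>) ^ m"
    by (rule mult_less_le_imp_less[OF f2 f1]) (use a1 p1 in auto)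
  thus ?thesis by (simp add: m algebra_simps)
qed

lemma an_le: "\<alpha> ^ n \<le> (1 - \<alpha>) ^ n" using a1 a2 by (intro power_mono) auto

lemma Delta_pos: "0 < \<Delta>"
proof -
  have "(1 - p) * \<alpha> ^ n \<le> p * \<alpha> ^ n" using p1 a1 by (intro mult_right_mono) auto
  also have "p * \<alpha> ^ n < p * (1 - \<alpha>) ^ n"
  proof (rule mult_strict_left_mono)
    show "\<alpha> ^ n < (1 - \<alpha>) ^ n" using a1 a2 n_pos by (intro power_strict_mono) auto
  qed (use p1 in auto)
  finally have "0 < p * (1 - \<alpha>) ^ n - (1 - p) * \<alpha> ^ n" by simp
  hence "0 < c1 * (p * (1 - \<alpha>) ^ n - (1 - p) * \<alpha> ^ n)" using c1_pos by simp
  thus ?thesis by (simp add: \<Delta>_def algebra_simps)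
qed

lemma diff1: "P One y - P Ze y \<le> \<Delta>"
proof -
  have "p * Aq n \<alpha> y \<le> p * (1 - \<alpha>) ^ n" using Aq_bounds p1 by (intro mult_left_mono) auto
  moreover have "(1 - p) * \<alpha> ^ n \<le> (1 - p) * Bq n \<alpha> y" using Bq_bounds p2 by (intro mult_left_mono) auto
  ultimately have "p * Aq n \<alpha> y - (1 - p) * Bq n \<alpha> y \<le> p * (1 - \<alpha>) ^ n - (1 - p) * \<alpha> ^ n" by linarith
  hence "c1 * (p * Aq n \<alpha> y - (1 - p) * Bq n \<alpha> y) \<le> c1 * (p * (1 - \<alpha>) ^ n - (1 - p) * \<alpha> ^ n)"
    using c1_pos by (intro mult_left_mono) auto
  thus ?thesis by (simp add: \<Delta>_def P_O P_Zr algebra_simps)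
qed

lemma diff2: "P Ze y - P One y \<le> \<Delta>"
proof -
  have "(1 - p) * Bq n \<alpha> y \<le> (1 - p) * (1 - \<alpha>) ^ n" using Bq_bounds p2 by (intro mult_left_mono) auto
  also have "\<dots> \<le> p * (1 - \<alpha>) ^ n" using p1 a2 by (intro mult_right_mono) auto
  finally have A: "(1 - p) * Bq n \<alpha> y \<le> p * (1 - \<alpha>) ^ n" .
  have "(1 - p) * \<alpha> ^ n \<le> p * \<alpha> ^ n" using p1 a1 by (intro mult_right_mono) auto
  also have "\<dots> \<le> p * Aq n \<alpha> y" using Aq_bounds p1 by (intro mult_left_mono) auto
  finally have B: "(1 - p) * \<alpha> ^ n \<le> p * Aq n \<alpha> y" .
  have "(1 - p) * Bq n \<alpha> y - p * Aq n \<alpha> y \<le> p * (1 - \<alpha>) ^ n - (1 - p) * \<alpha> ^ n" using A B by linarith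
  hence "c1 * ((1 - p) * Bq n \<alpha> y - p * Aq n \<alpha> y) \<le> c1 * (p * (1 - \<alpha>) ^ n - (1 - p) * \<alpha> ^ n)"
    using c1_pos by (intro mult_left_mono) auto
  thus ?thesis by (simp add: \<Delta>_def P_O P_Zr algebra_simps)
qed

definition "Dc = \<Delta> / \<alpha> ^ n"

lemma Dc_nonneg: "0 \<le> Dc" using Delta_pos a1 by (simp add: Dc_def)

lemma Dc_PY: "\<Delta> \<le> Dc * PY n p r \<alpha> y"
proof -
  have "\<Delta> = Dc * \<alpha> ^ n" using a1 by (simp add: Dc_def)
  also have "\<dots> \<le> Dc * PY n p r \<alpha> y" using Dc_nonneg PY_ge by (intro mult_left_mono)
  finally show ?thesis .
qed

lemma key_col:
  assumes ch: "is_channel n W" and z: "z \<in> S"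
  shows "(\<Sum>y\<in>S. W y z * Max ((\<lambda>x. P x y) ` S)) - Max ((\<lambda>x. \<Sum>y\<in>S. P x y * W y z) ` S)
     \<le> Dc * ((\<Sum>y\<in>S. PY n p r \<alpha> y * W y z) - Max ((\<lambda>y. PY n p r \<alpha> y * W y z) ` S))"
proof -
  have W0: "\<And>y. y \<in> S \<Longrightarrow> 0 \<le> W y z" using ch z by (auto simp: is_channel_def)
  have "Max ((\<lambda>y. PY n p r \<alpha> y * W y z) ` S) \<in> (\<lambda>y. PY n p r \<alpha> y * W y z) ` S"
    using S_ne by (intro Max_in) auto
  then obtain y1 where y1: "y1 \<in> S" "Max ((\<lambda>y. PY n p r \<alpha> y * W y z) ` S) = PY n p r \<alpha> y1 * W y1 z"
    by auto
  define c where "c = (if P Ze y1 \<le> P One y1 then One else Ze)"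
  have cS: "c \<in> S" using O_in Zr_in by (simp add: c_def)
  have mc: "Max ((\<lambda>x. P x y1) ` S) = P c y1" unfolding m_eq c_def by (simp add: max_def)
  have ge: "(\<Sum>y\<in>S. P c y * W y z) \<le> Max ((\<lambda>x. \<Sum>y\<in>S. P x y * W y z) ` S)"
    using cS by (intro Max_ge) auto
  have pt: "W y z * Max ((\<lambda>x. P x y) ` S) - P c y * W y z
      \<le> Dc * PY n p r \<alpha> y * W y z - (if y = y1 then Dc * PY n p r \<alpha> y1 * W y1 z else 0)"
    if yS: "y \<in> S" for y
  proof (cases "y = y1")
    case True thus ?thesis using mc by (simp add: algebra_simps)
  next
    case False
    have "Max ((\<lambda>x. P x y) ` S) - P c y \<le> \<Delta>"
      unfolding m_eq c_def using diff1[of y] diff2[of y] by (auto simp: max_def)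
    also have "\<dots> \<le> Dc * PY n p r \<alpha> y" by (rule Dc_PY)
    finally have "W y z * (Max ((\<lambda>x. P x y) ` S) - P c y) \<le> W y z * (Dc * PY n p r \<alpha> y)"
      using W0[OF yS] by (intro mult_left_mono) auto
    thus ?thesis using False by (simp add: algebra_simps)
  qed
  have "(\<Sum>y\<in>S. W y z * Max ((\<lambda>x. P x y) ` S)) - Max ((\<lambda>x. \<Sum>y\<in>S. P x y * W y z) ` S)
      \<le> (\<Sum>y\<in>S. W y z * Max ((\<lambda>x. P x y) ` S)) - (\<Sum>y\<in>S. P c y * W y z)" using ge by linarith
  also have "\<dots> = (\<Sum>y\<in>S. W y z * Max ((\<lambda>x. P x y) ` S) - P c y * W y z)"
    by (simp add: sum_subtractf)
  also have "\<dots> \<le> (\<Sum>y\<in>S. Dc * PY n p r \<alpha> y * W y z - (if y = y1 then Dc * PY n p r \<alpha> y1 * W y1 z else 0))"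
    using pt by (intro sum_mono) auto
  also have "\<dots> = (\<Sum>y\<in>S. Dc * PY n p r \<alpha> y * W y z) - Dc * PY n p r \<alpha> y1 * W y1 z"
    using y1(1) by (simp add: sum_subtractf)
  also have "\<dots> = Dc * ((\<Sum>y\<in>S. PY n p r \<alpha> y * W y z) - Max ((\<lambda>y. PY n p r \<alpha> y * W y z) ` S))"
    unfolding y1(2) by (simp add: sum_distrib_left algebra_simps)
  finally show ?thesis .
qed

lemma upper:
  assumes ch: "is_channel n W"
  shows "PcXY n p r \<alpha> - PcXZ n p r \<alpha> W \<le> Dc * (1 - PcYZ n p r \<alpha> W)"
proof -
  have rs: "\<And>y. y \<in> S \<Longrightarrow> (\<Sum>z\<in>S. W y z) = 1" using ch by (auto simp: is_channel_def)
  have e1: "(\<Sum>z\<in>S. \<Sum>y\<in>S. W y z * Max ((\<lambda>x. P x y) ` S)) = PcXY n p r \<alpha>"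
  proof -
    have "(\<Sum>z\<in>S. \<Sum>y\<in>S. W y z * Max ((\<lambda>x. P x y) ` S)) = (\<Sum>y\<in>S. (\<Sum>z\<in>S. W y z) * Max ((\<lambda>x. P x y) ` S))"
      by (subst sum.swap) (simp add: sum_distrib_right)
    also have "\<dots> = (\<Sum>y\<in>S. Max ((\<lambda>x. P x y) ` S))" using rs by simp
    finally show ?thesis by (simp add: PcXY_def)
  qed
  have e2: "(\<Sum>z\<in>S. \<Sum>y\<in>S. PY n p r \<alpha> y * W y z) = 1"
  proof -
    have "(\<Sum>z\<in>S. \<Sum>y\<in>S. PY n p r \<alpha> y * W y z) = (\<Sum>y\<in>S. PY n p r \<alpha> y * (\<Sum>z\<in>S. W y z))"
      by (subst sum.swap) (simp add: sum_distrib_left)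
    also have "\<dots> = (\<Sum>y\<in>S. PY n p r \<alpha> y)" using rs by simp
    finally show ?thesis using PY_sum by simp
  qed
  have "(\<Sum>z\<in>S. (\<Sum>y\<in>S. W y z * Max ((\<lambda>x. P x y) ` S)) - Max ((\<lambda>x. \<Sum>y\<in>S. P x y * W y z) ` S))
     \<le> (\<Sum>z\<in>S. Dc * ((\<Sum>y\<in>S. PY n p r \<alpha> y * W y z) - Max ((\<lambda>y. PY n p r \<alpha> y * W y z) ` S)))"
    using key_col[OF ch] by (intro sum_mono) auto
  thus ?thesis
    by (simp add: sum_subtractf sum_distrib_left[symmetric] e1 e2 PcXZ_def PcYZ_def)
qed

end


context S5 begin

abbreviation "gZ \<gamma> z \<equiv> (if z = Ze then \<gamma> else if z = One then 1 - \<gamma> else (0::real))"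

lemma Zchan_alt: "Zchan n \<gamma> y z = (if y \<noteq> One then (if z = y then 1 else 0) else gZ \<gamma> z)"
  by (simp add: Zchan_def)

lemma Zchan_channel: "0 \<le> \<gamma> \<Longrightarrow> \<gamma> \<le> 1 \<Longrightarrow> is_channel n (Zchan n \<gamma>)"
  unfolding is_channel_def
proof (intro ballI conjI)
  fix y z assume "y \<in> S" "0 \<le> \<gamma>" "\<gamma> \<le> 1"
  thus "0 \<le> Zchan n \<gamma> y z" by (simp add: Zchan_def)
next
  fix y assume y: "y \<in> S"
  show "(\<Sum>z\<in>S. Zchan n \<gamma> y z) = 1"
  proof (cases "y = One")
    case True
    have "(\<Sum>z\<in>S. Zchan n \<gamma> y z) = (\<Sum>z\<in>S. (if z = Ze then \<gamma> else 0) + (if z = One then 1 - \<gamma> else 0))"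
      using True O_ne_Zr by (intro sum.cong) (auto simp: Zchan_def)
    also have "\<dots> = 1" using O_in Zr_in by (simp add: sum.distrib)
    finally show ?thesis .
  next
    case False
    have "(\<Sum>z\<in>S. Zchan n \<gamma> y z) = (\<Sum>z\<in>S. if y = z then 1 else 0)"
      using False by (intro sum.cong) (auto simp: Zchan_def)
    also have "\<dots> = 1" using y by simp
    finally show ?thesis .
  qed
qed

lemma colX:
  assumes z: "z \<in> S"
  shows "(\<Sum>y\<in>S. P x y * Zchan n \<gamma> y z) = (if z = One then 0 else P x z) + P x One * gZ \<gamma> z"
proof -
  have "(\<Sum>y\<in>S. P x y * Zchan n \<gamma> y z) = P x One * Zchan n \<gamma> One z + (\<Sum>y\<in>S - {One}. P x y * Zchan n \<gamma> y z)"
    using O_in by (simp add: sum.remove)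
  also have "(\<Sum>y\<in>S - {One}. P x y * Zchan n \<gamma> y z) = (\<Sum>y\<in>S - {One}. if z = y then P x y else 0)"
    by (intro sum.cong) (auto simp: Zchan_def)
  also have "\<dots> = (if z = One then 0 else P x z)" using z by (simp add: sum.delta)
  finally show ?thesis by (simp add: Zchan_def)
qed

lemma mx_One: "Max ((\<lambda>x. P x One) ` S) = P One One"
  unfolding m_eq using Delta_pos Delta_eq by simp

lemma P10_lt: "P One Ze < P Ze Ze"
proof -
  have "c1 * (p * \<alpha> ^ n) < c1 * ((1 - p) * (1 - \<alpha>) ^ n)" using c1_pos pa_n by simp
  thus ?thesis by (simp add: P_O P_Zr Aq_Zr Bq_Zr algebra_simps)
qed

lemma mx_Ze: "Max ((\<lambda>x. P x Ze) ` S) = P Ze Ze"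
  unfolding m_eq using P10_lt by simp

lemma PcXZ_Z:
  assumes g0: "0 \<le> \<gamma>" and g1: "\<gamma> \<le> 1" and g2: "\<gamma> * \<Delta> \<le> P Ze Ze - P One Ze"
    and g3: "2 \<le> n \<Longrightarrow> \<gamma> * K \<le> P Ze Ze - K"
  shows "PcXZ n p r \<alpha> (Zchan n \<gamma>) \<le> PcXY n p r \<alpha> - \<gamma> * \<Delta>"
proof -
  let ?b = "\<lambda>z. Max ((\<lambda>x. P x z) ` S) - (if z = One then \<gamma> * P One One else 0) + (if z = Ze then \<gamma> * P Ze One else 0)"
  have col: "Max ((\<lambda>x. \<Sum>y\<in>S. P x y * Zchan n \<gamma> y z) ` S) \<le> ?b z" if z: "z \<in> S" for z
  proof (rule Max.boundedI)
    show "finite ((\<lambda>x. \<Sum>y\<in>S. P x y * Zchan n \<gamma> y z) ` S)" by simp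
    show "(\<lambda>x. \<Sum>y\<in>S. P x y * Zchan n \<gamma> y z) ` S \<noteq> {}" using S_ne by simp
    fix v assume "v \<in> (\<lambda>x. \<Sum>y\<in>S. P x y * Zchan n \<gamma> y z) ` S"
    then obtain x where x: "x \<in> S" and v: "v = (if z = One then 0 else P x z) + P x One * gZ \<gamma> z"
      using colX[OF z] by auto
    have mz: "P x z \<le> Max ((\<lambda>x. P x z) ` S)" using x by (intro Max_ge) auto
    show "v \<le> ?b z"
    proof (cases "z = One")
      case True
      hence "v = P x One * (1 - \<gamma>)" using v O_ne_Zr by simp
      also have "\<dots> \<le> P One One * (1 - \<gamma>)"
        using mz True mx_One g1 by (intro mult_right_mono) auto
      finally show ?thesis using True O_ne_Zr mx_One by (simp add: algebra_simps)
    next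
      case nO: False
      show ?thesis
      proof (cases "z = Ze")
        case False thus ?thesis using v nO mz by simp
      next
        case True
        have vz: "v = P x Ze + \<gamma> * P x One" using v True nO by simp
        have "P x Ze + \<gamma> * P x One \<le> P Ze Ze + \<gamma> * P Ze One"
        proof (cases "x = One \<or> x = Ze")
          case True
          thus ?thesis using g2 Delta_eq by (auto simp: algebra_simps)
        next
          case False
          hence nc: "x \<noteq> One" "x \<noteq> Ze" by auto
          have n2: "2 \<le> n" using PX_nonconst(2)[OF x nc] .
          have "P x Ze + \<gamma> * P x One \<le> K + \<gamma> * K"
            using P_nonconst[OF x nc] g0 by (intro add_mono mult_left_mono) auto
          also have "\<dots> \<le> P Ze Ze" using g3[OF n2] by simp
          also have "\<dots> \<le> P Ze Ze + \<gamma> * P Ze One" using g0 P_nonneg by simp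
          finally show ?thesis .
        qed
        thus ?thesis using vz True mx_Ze nO by simp
      qed
    qed
  qed
  have "PcXZ n p r \<alpha> (Zchan n \<gamma>) \<le> (\<Sum>z\<in>S. ?b z)"
    unfolding PcXZ_def using col by (intro sum_mono) auto
  also have "\<dots> = PcXY n p r \<alpha> - \<gamma> * P One One + \<gamma> * P Ze One"
    using O_in Zr_in by (simp add: sum.distrib sum_subtractf PcXY_def)
  also have "\<dots> = PcXY n p r \<alpha> - \<gamma> * \<Delta>" by (simp add: Delta_eq algebra_simps)
  finally show ?thesis .
qed

lemma PcYZ_Z:
  assumes g0: "0 \<le> \<gamma>" and g1: "\<gamma> \<le> 1" and g4: "\<gamma> \<le> \<alpha> ^ n"
  shows "PcYZ n p r \<alpha> (Zchan n \<gamma>) = 1 - \<gamma> * PY n p r \<alpha> One"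
proof -
  have col: "Max ((\<lambda>y. PY n p r \<alpha> y * Zchan n \<gamma> y z) ` S) = PY n p r \<alpha> z - (if z = One then \<gamma> * PY n p r \<alpha> One else 0)"
    if z: "z \<in> S" for z
  proof (rule Max_eqI)
    show "finite ((\<lambda>y. PY n p r \<alpha> y * Zchan n \<gamma> y z) ` S)" by simp
    show "PY n p r \<alpha> z - (if z = One then \<gamma> * PY n p r \<alpha> One else 0) \<in> (\<lambda>y. PY n p r \<alpha> y * Zchan n \<gamma> y z) ` S"
      using z O_ne_Zr by (intro image_eqI[where x=z]) (auto simp: Zchan_def algebra_simps)
    fix v assume "v \<in> (\<lambda>y. PY n p r \<alpha> y * Zchan n \<gamma> y z) ` S"
    then obtain y where y: "y \<in> S" and v: "v = PY n p r \<alpha> y * Zchan n \<gamma> y z" by auto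
    have PYy: "0 \<le> PY n p r \<alpha> y" "0 \<le> PY n p r \<alpha> z" by (rule PY_nonneg)+
    show "v \<le> PY n p r \<alpha> z - (if z = One then \<gamma> * PY n p r \<alpha> One else 0)"
    proof (cases "y = One")
      case False
      have "\<gamma> * PY n p r \<alpha> One \<le> 1 * PY n p r \<alpha> One"
        using g1 PY_nonneg by (intro mult_right_mono) auto
      thus ?thesis using False v PYy by (auto simp: Zchan_def)
    next
      case True
      show ?thesis
      proof (cases "z = One")
        case True thus ?thesis using v \<open>y = One\<close> O_ne_Zr by (simp add: Zchan_def algebra_simps)
      next
        case False
        have "\<gamma> * PY n p r \<alpha> One \<le> \<alpha> ^ n * 1"
          using g0 g4 PY_le1[OF O_in] PY_nonneg by (intro mult_mono) auto
        also have "\<dots> \<le> PY n p r \<alpha> z" using PY_ge by simp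
        finally have "\<gamma> * PY n p r \<alpha> One \<le> PY n p r \<alpha> z" .
        thus ?thesis using v \<open>y = One\<close> False PYy g1 O_ne_Zr
          by (auto simp: Zchan_def algebra_simps)
      qed
    qed
  qed
  have "PcYZ n p r \<alpha> (Zchan n \<gamma>) = (\<Sum>z\<in>S. PY n p r \<alpha> z - (if z = One then \<gamma> * PY n p r \<alpha> One else 0))"
    unfolding PcYZ_def using col by (intro sum.cong) auto
  also have "\<dots> = 1 - \<gamma> * PY n p r \<alpha> One" using O_in PY_sum by (simp add: sum_subtractf)
  finally show ?thesis .
qed

end


context S5 begin

lemma PcX_nonneg: "0 \<le> PcX n p r"
proof -
  have "PX n p r One \<le> PcX n p r" unfolding PcX_def using O_in by (intro Max_ge) auto
  moreover have "0 \<le> PX n p r One" using PX_O p1 r2 by simp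
  ultimately show ?thesis by linarith
qed

lemma PcX_lt: "PcX n p r < PcXY n p r \<alpha>"
proof -
  have "PcX n p r \<in> PX n p r ` S" unfolding PcX_def using S_ne by (intro Max_in) auto
  then obtain xs where xs: "xs \<in> S" "PcX n p r = PX n p r xs" by auto
  have le: "P xs y \<le> Max ((\<lambda>x. P x y) ` S)" for y using xs by (intro Max_ge) auto
  have "\<exists>y\<in>S. P xs y < Max ((\<lambda>x. P x y) ` S)"
  proof (cases "xs = Ze")
    case True
    have "P Ze One < P One One" using Delta_pos Delta_eq by simp
    thus ?thesis using True O_in mx_One by (intro bexI[of _ One]) auto
  next
    case False
    have "P xs Ze < P Ze Ze"
    proof (cases "xs = One")
      case True thus ?thesis using P10_lt by simp
    next
      case nO: False
      have "P xs Ze \<le> K" using P_nonconst[OF xs(1) nO False] .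
      also have "K < P Ze Ze" using K_lt PX_nonconst(2)[OF xs(1) nO False] by simp
      finally show ?thesis .
    qed
    thus ?thesis using Zr_in mx_Ze by (intro bexI[of _ Ze]) auto
  qed
  hence "(\<Sum>y\<in>S. P xs y) < (\<Sum>y\<in>S. Max ((\<lambda>x. P x y) ` S))"
    using le by (intro sum_strict_mono_ex1) auto
  thus ?thesis using xs sum_noise_x[OF xs(1)] by (simp add: PcXY_def)
qed

lemma zeta_eq: "zeta n p r \<alpha> \<epsilon> = (PcXY n p r \<alpha> - \<epsilon> ^ n) / \<Delta>"
proof -
  obtain m where m: "n = Suc m" using n_pos by (cases n) auto
  have c: "(1 - r) ^ n = (1 - r) * c1" using m by simp
  have "p * ((1 - \<alpha>) * (1 - r)) ^ n - (1 - p) * (\<alpha> * (1 - r)) ^ n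
      = p * (1 - \<alpha>) ^ n * (1 - r) ^ n - (1 - p) * \<alpha> ^ n * (1 - r) ^ n"
    by (simp only: power_mult_distrib mult.assoc)
  also have "\<dots> = (1 - r) * \<Delta>" unfolding c \<Delta>_def by (simp add: algebra_simps)
  finally have eq: "p * ((1 - \<alpha>) * (1 - r)) ^ n - (1 - p) * (\<alpha> * (1 - r)) ^ n = (1 - r) * \<Delta>" .
  show ?thesis using r2 unfolding zeta_def eq by simp
qed

end

theorem theorem5:
  fixes n :: nat and p r \<alpha> :: real
  assumes "odd n"
    and "1/2 \<le> p" "p < 1"
    and "0 < \<alpha>" "\<alpha> < 1/2"
    and "0 \<le> r" "r < 1"
    and "(1 - \<alpha>) * (1 - p) > \<alpha> * p"
    and "r / (1 - r) < (\<alpha> / (1 - \<alpha>)) ^ (n - 1)"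
  shows "\<exists>\<epsilon>L. root n (PcX n p r) \<le> \<epsilon>L \<and> \<epsilon>L < root n (PcXY n p r \<alpha>) \<and>
    (\<forall>\<epsilon>. \<epsilon>L \<le> \<epsilon> \<and> \<epsilon> \<le> root n (PcXY n p r \<alpha>) \<longrightarrow>
       1 - zeta n p r \<alpha> \<epsilon> * PY n p r \<alpha> (ones n) \<le> (hlow n p r \<alpha> \<epsilon>) ^ n
     \<and> (hlow n p r \<alpha> \<epsilon>) ^ n \<le> 1 - zeta n p r \<alpha> \<epsilon> * \<alpha> ^ n
     \<and> is_channel n (Zchan n (zeta n p r \<alpha> \<epsilon>))
     \<and> root n (PcXZ n p r \<alpha> (Zchan n (zeta n p r \<alpha> \<epsilon>))) \<le> \<epsilon>
     \<and> PcYZ n p r \<alpha> (Zchan n (zeta n p r \<alpha> \<epsilon>)) = 1 - zeta n p r \<alpha> \<epsilon> * PY n p r \<alpha> (ones n))"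
proof -
  interpret S5 n p r \<alpha> using assms by unfold_locales
  have npos: "0 < n" by (rule n_pos)
  define PXY where "PXY = PcXY n p r \<alpha>"
  define g3 where "g3 = (if 2 \<le> n then (P Ze Ze - K) / (K + 1) else 1)"
  define \<gamma>1 where "\<gamma>1 = min (min 1 (\<alpha> ^ n)) (min ((P Ze Ze - P One Ze) / \<Delta>) (min g3 ((PXY - PcX n p r) / \<Delta>)))"
  have Dp: "0 < \<Delta>" by (rule Delta_pos)
  have g3p: "0 < g3" using K_lt K_nonneg unfolding g3_def by (auto intro!: divide_pos_pos)
  have "0 < (P Ze Ze - P One Ze) / \<Delta>" using P10_lt Dp by simp
  moreover have "0 < (PXY - PcX n p r) / \<Delta>" using PcX_lt Dp by (simp add: PXY_def)
  ultimately have g1p: "0 < \<gamma>1" using g3p a1 unfolding \<gamma>1_def by simp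
  define \<epsilon>L where "\<epsilon>L = root n (PXY - \<gamma>1 * \<Delta>)"
  have "\<gamma>1 \<le> (PXY - PcX n p r) / \<Delta>" unfolding \<gamma>1_def by simp
  hence "\<gamma>1 * \<Delta> \<le> PXY - PcX n p r" using Dp by (simp add: le_divide_eq)
  hence L1: "root n (PcX n p r) \<le> \<epsilon>L" unfolding \<epsilon>L_def using npos by simp
  have L2: "\<epsilon>L < root n PXY" unfolding \<epsilon>L_def using npos g1p Dp by simp
  have L3: "1 - zeta n p r \<alpha> \<epsilon> * PY n p r \<alpha> (ones n) \<le> (hlow n p r \<alpha> \<epsilon>) ^ n
     \<and> (hlow n p r \<alpha> \<epsilon>) ^ n \<le> 1 - zeta n p r \<alpha> \<epsilon> * \<alpha> ^ n
     \<and> is_channel n (Zchan n (zeta n p r \<alpha> \<epsilon>))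
     \<and> root n (PcXZ n p r \<alpha> (Zchan n (zeta n p r \<alpha> \<epsilon>))) \<le> \<epsilon>
     \<and> PcYZ n p r \<alpha> (Zchan n (zeta n p r \<alpha> \<epsilon>)) = 1 - zeta n p r \<alpha> \<epsilon> * PY n p r \<alpha> (ones n)"
    if e1: "\<epsilon>L \<le> \<epsilon>" and e2: "\<epsilon> \<le> root n PXY" for \<epsilon>
  proof -
    define \<gamma> where "\<gamma> = zeta n p r \<alpha> \<epsilon>"
    have \<gamma>: "\<gamma> = (PXY - \<epsilon> ^ n) / \<Delta>" unfolding \<gamma>_def zeta_eq PXY_def ..
    have "\<epsilon>L ^ n \<le> \<epsilon> ^ n" using e1 odd by (intro power_mono_odd)
    hence En1: "PXY - \<gamma>1 * \<Delta> \<le> \<epsilon> ^ n" unfolding \<epsilon>L_def using odd by (simp add: odd_real_root_pow)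
    have "\<epsilon> ^ n \<le> root n PXY ^ n" using e2 odd by (intro power_mono_odd)
    hence En2: "\<epsilon> ^ n \<le> PXY" using odd by (simp add: odd_real_root_pow)
    have g0: "0 \<le> \<gamma>" unfolding \<gamma> using En2 Dp by simp
    have "\<gamma> \<le> \<gamma>1" unfolding \<gamma> using En1 Dp by (simp add: divide_le_eq mult.commute)
    hence gg: "\<gamma> \<le> 1" "\<gamma> \<le> \<alpha> ^ n" "\<gamma> \<le> (P Ze Ze - P One Ze) / \<Delta>" "\<gamma> \<le> g3"
      unfolding \<gamma>1_def by auto
    have g2: "\<gamma> * \<Delta> \<le> P Ze Ze - P One Ze" using gg(3) Dp by (simp add: le_divide_eq)
    have g3: "\<gamma> * K \<le> P Ze Ze - K" if n2: "2 \<le> n"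
    proof -
      have "\<gamma> \<le> (P Ze Ze - K) / (K + 1)" using gg(4) n2 by (simp add: g3_def)
      hence "\<gamma> * (K + 1) \<le> P Ze Ze - K" using K_nonneg by (simp add: le_divide_eq)
      moreover have "\<gamma> * K \<le> \<gamma> * (K + 1)" using g0 by (intro mult_left_mono) auto
      ultimately show ?thesis by linarith
    qed
    have ch: "is_channel n (Zchan n \<gamma>)" using Zchan_channel g0 gg(1) .
    have XZ: "PcXZ n p r \<alpha> (Zchan n \<gamma>) \<le> \<epsilon> ^ n"
      using PcXZ_Z[OF g0 gg(1) g2 g3] unfolding \<gamma> PXY_def using Dp by simp
    have rXZ: "root n (PcXZ n p r \<alpha> (Zchan n \<gamma>)) \<le> \<epsilon>"
    proof -
      have "root n (PcXZ n p r \<alpha> (Zchan n \<gamma>)) \<le> root n (\<epsilon> ^ n)" using XZ npos by simp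
      thus ?thesis using odd by (simp add: odd_real_root_power_cancel)
    qed
    have YZ: "PcYZ n p r \<alpha> (Zchan n \<gamma>) = 1 - \<gamma> * PY n p r \<alpha> One"
      using PcYZ_Z[OF g0 gg(1) gg(2)] .
    define T where "T = {root n (PcYZ n p r \<alpha> W) | W. is_channel n W \<and> root n (PcXZ n p r \<alpha> W) \<le> \<epsilon>}"
    have hl: "hlow n p r \<alpha> \<epsilon> = Sup T" unfolding hlow_def T_def ..
    have ub: "t \<le> root n (1 - \<gamma> * \<alpha> ^ n)" if "t \<in> T" for t
    proof -
      obtain W where W: "t = root n (PcYZ n p r \<alpha> W)" "is_channel n W" "root n (PcXZ n p r \<alpha> W) \<le> \<epsilon>"
        using \<open>t \<in> T\<close> unfolding T_def by auto
      have "root n (PcXZ n p r \<alpha> W) ^ n \<le> \<epsilon> ^ n" using W(3) odd by (intro power_mono_odd)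
      hence xz: "PcXZ n p r \<alpha> W \<le> \<epsilon> ^ n" using odd by (simp add: odd_real_root_pow)
      have up: "PXY - PcXZ n p r \<alpha> W \<le> Dc * (1 - PcYZ n p r \<alpha> W)" using upper[OF W(2)] by (simp add: PXY_def)
      have "\<gamma> * \<Delta> = PXY - \<epsilon> ^ n" unfolding \<gamma> using Dp by simp
      also have "\<dots> \<le> Dc * (1 - PcYZ n p r \<alpha> W)" using up xz by linarith
      finally have "\<gamma> * \<Delta> \<le> \<Delta> / \<alpha> ^ n * (1 - PcYZ n p r \<alpha> W)" by (simp add: Dc_def)
      hence "\<gamma> * \<alpha> ^ n * \<Delta> \<le> (1 - PcYZ n p r \<alpha> W) * \<Delta>" using a1 by (simp add: field_simps)
      hence "\<gamma> * \<alpha> ^ n \<le> 1 - PcYZ n p r \<alpha> W" using Dp by simp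
      hence "PcYZ n p r \<alpha> W \<le> 1 - \<gamma> * \<alpha> ^ n" by linarith
      thus ?thesis using W(1) npos by simp
    qed
    have inT: "root n (PcYZ n p r \<alpha> (Zchan n \<gamma>)) \<in> T" unfolding T_def using ch rXZ by blast
    have bdd: "bdd_above T" using ub by (intro bdd_aboveI) auto
    have "hlow n p r \<alpha> \<epsilon> \<le> root n (1 - \<gamma> * \<alpha> ^ n)" unfolding hl using ub inT
      by (intro cSup_least) auto
    hence H1': "hlow n p r \<alpha> \<epsilon> ^ n \<le> 1 - \<gamma> * \<alpha> ^ n"
      using odd power_mono_odd[OF odd] by (metis odd_real_root_pow)
    have "root n (PcYZ n p r \<alpha> (Zchan n \<gamma>)) \<le> hlow n p r \<alpha> \<epsilon>" unfolding hl using inT bdd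
      by (intro cSup_upper)
    hence "root n (PcYZ n p r \<alpha> (Zchan n \<gamma>)) ^ n \<le> hlow n p r \<alpha> \<epsilon> ^ n" using odd by (intro power_mono_odd)
    hence H2': "1 - \<gamma> * PY n p r \<alpha> One \<le> hlow n p r \<alpha> \<epsilon> ^ n" using odd YZ by (simp add: odd_real_root_pow)
    show ?thesis using H1' H2' ch rXZ YZ unfolding \<gamma>_def by simp
  qed
  show ?thesis
    by (rule exI[where x=\<epsilon>L]) (use L1 L2 L3 in \<open>simp add: PXY_def\<close>)
qed


end
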